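(* The elements $\alpha^{g,h}_{\chi,\psi}$, for $\chi\in X_N$ (with $\psi=\theta\chi^{-1}$) and $g,h$ relatively prime divisors of $N$, generate $H^\theta$ as an $\mathcal{O}$-module.
   Context: $p$ is an odd prime, $M$ a positive integer with $p\nmid M\varphi(M)$, $N=M$ or $Mp$, $N>1$, $\Delta=(\mathbb{Z}/N\mathbb{Z})^\times/\langle-1\rangle$. $H$ is a space of level $N$ modular symbols: a $\mathbb{Z}_p[\Delta]$-module spanned by symbols $[u:v]$ ($u,v\in\mathbb{Z}/N\mathbb{Z}$ generating the unit ideal) satisfying $[u:v]=[-u:-v]=-[-v:u]$, $[u:v]=[u:u+v]+[u+v:v]$, $\langle a\rangle[u:v]=[au:av]$. $\theta:\Delta\to\mathbb{C}_p^\times$ is a character, $\mathcal{O}=\mathbb{Z}_p[\mu_{\varphi(N)}]$, $X_N=\mathrm{Hom}((\mathbb{Z}/N\mathbb{Z})^\times,\mathcal{O}^\times)$, $e_\theta=\frac1{\varphi(N)}\sum_a\theta^{-1}(a)\langle a\rangle$, $H^\theta=e_\theta(H\otimes_{\mathbb{Z}_p}\mathcal{O})$, and $\alpha^{g,h}_{\chi,\psi}=\frac{1}{\varphi(N)^2}\sum_{a,b\in(\mathbb{Z}/N\mathbb{Z})^\times}\chi^{-1}(a)\psi^{-1}(b)[ga:hb]$. *)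

theory Defs
  imports "HOL-Number_Theory.Number_Theory"
begin

text \<open>Residues mod N are represented by naturals in {0..<N}.\<close>

definition units_mod :: "nat \<Rightarrow> nat set" where
  "units_mod N = {a. a < N \<and> coprime a N}"

definition unimod :: "nat \<Rightarrow> nat \<Rightarrow> nat \<Rightarrow> bool" where
  "unimod N u v \<longleftrightarrow> u < N \<and> v < N \<and> coprime (gcd u v) N"

definition minv :: "nat \<Rightarrow> nat \<Rightarrow> nat" where
  "minv N a = (THE b. b < N \<and> [a * b = 1] (mod N))"

text \<open>X_N = Hom((Z/N)^*, O^*), characters extended by 0 off the units\<close>
definition dirichlet_chars :: "nat \<Rightarrow> (nat \<Rightarrow> 'o::comm_ring_1) set" where
  "dirichlet_chars N = {\<chi>. \<chi> 1 = 1
      \<and> (\<forall>a\<in>units_mod N. \<forall>b\<in>units_mod N. \<chi> (a * b mod N) = \<chi> a * \<chi> b)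
      \<and> (\<forall>a. a \<notin> units_mod N \<longrightarrow> \<chi> a = 0)}"

definition char_inv :: "nat \<Rightarrow> (nat \<Rightarrow> 'o::comm_ring_1) \<Rightarrow> nat \<Rightarrow> 'o" where
  "char_inv N \<chi> a = (if a \<in> units_mod N then \<chi> (minv N a) else 0)"

definition nat_inv :: "nat \<Rightarrow> 'o::comm_ring_1" where
  "nat_inv n = (THE w. of_nat n * w = 1)"

text \<open>A space of level N modular symbols, already tensored up to the coefficient ring
  (the O-module spanned by the symbols sb u v = [u:v], with the Delta-action act a = <a>).\<close>
definition modsym_space ::
  "('o::comm_ring_1 \<Rightarrow> 'm::ab_group_add \<Rightarrow> 'm) \<Rightarrow> nat \<Rightarrow> (nat \<Rightarrow> nat \<Rightarrow> 'm)
     \<Rightarrow> (nat \<Rightarrow> 'm \<Rightarrow> 'm) \<Rightarrow> bool" where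
  "modsym_space smul N sb act \<longleftrightarrow>
     Modules.module smul
     \<and> (\<forall>u v. unimod N u v \<longrightarrow>
           sb u v = sb ((N - u) mod N) ((N - v) mod N)
         \<and> sb u v = - sb ((N - v) mod N) u
         \<and> sb u v = sb u ((u + v) mod N) + sb ((u + v) mod N) v)
     \<and> (\<forall>a\<in>units_mod N.
           (\<forall>c x. act a (smul c x) = smul c (act a x))
         \<and> (\<forall>x y. act a (x + y) = act a x + act a y)
         \<and> (\<forall>u v. unimod N u v \<longrightarrow> act a (sb u v) = sb (a * u mod N) (a * v mod N)))
     \<and> Modules.module.span smul {sb u v | u v. unimod N u v} = UNIV"

definition e_proj ::
  "('o::comm_ring_1 \<Rightarrow> 'm::ab_group_add \<Rightarrow> 'm) \<Rightarrow> (nat \<Rightarrow> 'm \<Rightarrow> 'm) \<Rightarrow> nat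
     \<Rightarrow> (nat \<Rightarrow> 'o) \<Rightarrow> 'm \<Rightarrow> 'm" where
  "e_proj smul act N \<theta> x =
     smul (nat_inv (totient N)) (\<Sum>a\<in>units_mod N. smul (char_inv N \<theta> a) (act a x))"

definition alpha ::
  "('o::comm_ring_1 \<Rightarrow> 'm::ab_group_add \<Rightarrow> 'm) \<Rightarrow> (nat \<Rightarrow> nat \<Rightarrow> 'm) \<Rightarrow> nat
     \<Rightarrow> nat \<Rightarrow> nat \<Rightarrow> (nat \<Rightarrow> 'o) \<Rightarrow> (nat \<Rightarrow> 'o) \<Rightarrow> 'm" where
  "alpha smul sb N g h \<chi> \<psi> =
     smul ((nat_inv (totient N))^2)
       (\<Sum>a\<in>units_mod N. \<Sum>b\<in>units_mod N.
          smul (char_inv N \<chi> a * char_inv N \<psi> b) (sb (g * a mod N) (h * b mod N)))"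

end

theory Submission
  imports Defs
begin

locale grp =
  fixes N :: nat
  assumes N1: "N > 1"
begin

abbreviation "G \<equiv> units_mod N"
abbreviation "e \<equiv> totient N"

lemma G_iff: "a \<in> G \<longleftrightarrow> a < N \<and> coprime a N"
  by (simp add: units_mod_def)

lemma one_G[simp]: "1 \<in> G"
  using N1 by (simp add: G_iff)

lemma one_G'[simp]: "Suc 0 \<in> G"
  using one_G by simp

lemma G_mod[simp]: "a \<in> G \<Longrightarrow> a mod N = a"
  by (simp add: G_iff)

lemma G_mult[simp]: "a \<in> G \<Longrightarrow> b \<in> G \<Longrightarrow> a * b mod N \<in> G"
  using N1 by (auto simp: G_iff)

lemma G_pow[simp]: "a \<in> G \<Longrightarrow> a ^ n mod N \<in> G"
  using N1 by (auto simp: G_iff)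

lemma finite_G[simp]: "finite G"
  by (simp add: units_mod_def)

lemma G_totatives: "G = totatives N"
proof
  show "G \<subseteq> totatives N"
  proof
    fix x assume x: "x \<in> G"
    have "x \<noteq> 0"
    proof
      assume "x = 0"
      then have "coprime 0 N" using x by (simp add: G_iff)
      then have "N = 1" by simp
      then show False using N1 by simp
    qed
    then show "x \<in> totatives N" using x by (simp add: G_iff totatives_def)
  qed
  show "totatives N \<subseteq> G"
  proof
    fix x assume x: "x \<in> totatives N"
    then have "x \<noteq> N" using N1 by (auto simp: totatives_def)
    then show "x \<in> G" using x by (simp add: G_iff totatives_def)
  qed
qed

lemma card_G: "card G = e"
  by (simp add: G_totatives totient_def)

lemma e_pos: "e > 0"
  using N1 by simp

lemma euler: assumes a: "a \<in> G" shows "a ^ e mod N = 1"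
proof -
  have "coprime a N" using a by (simp add: G_iff)
  then have "[a ^ e = 1] (mod N)" by (rule euler_theorem)
  then have "a ^ e mod N = 1 mod N" by (simp only: cong_def)
  then show ?thesis using N1 by simp
qed

lemma inv_ex: "a \<in> G \<Longrightarrow> a * (a ^ (e - 1) mod N) mod N = 1"
proof -
  assume a: "a \<in> G"
  have "a * a ^ (e - 1) = a ^ e"
    using e_pos by (metis Suc_diff_1 power_Suc)
  then have "a * (a ^ (e - 1) mod N) mod N = a ^ e mod N"
    by (simp add: mod_mult_right_eq)
  then show ?thesis using euler a by simp
qed

lemma minv_eq: assumes a: "a \<in> G" shows "minv N a = a ^ (e - 1) mod N"
  unfolding minv_def
proof (rule the_equality)
  show "a ^ (e - 1) mod N < N \<and> [a * (a ^ (e - 1) mod N) = 1] (mod N)"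
    using inv_ex[OF a] N1 by (simp add: cong_def)
next
  fix b assume b: "b < N \<and> [a * b = 1] (mod N)"
  have c: "coprime a N" using a by (simp add: G_iff)
  have "[a * b = a * (a ^ (e - 1) mod N)] (mod N)"
    using b inv_ex[OF a] N1 by (simp add: cong_def)
  then have "[b = a ^ (e - 1) mod N] (mod N)"
    using cong_mult_lcancel_nat[OF c] by blast
  then have "b mod N = a ^ (e - 1) mod N" by (simp add: cong_def)
  then show "b = a ^ (e - 1) mod N"
    using b by simp
qed

lemma minv_G[simp]: "a \<in> G \<Longrightarrow> minv N a \<in> G"
  by (simp add: minv_eq)

lemma minv_mult[simp]: "a \<in> G \<Longrightarrow> a * minv N a mod N = 1"
  by (metis minv_eq inv_ex)

lemma cancel: assumes "c \<in> G" "x < N" "y < N" "c * x mod N = c * y mod N" shows "x = y"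
proof -
  have "coprime c N" using assms by (simp add: G_iff)
  then have "[x = y] (mod N)" using assms(4) cong_mult_lcancel_nat by (auto simp: cong_def)
  then show ?thesis using assms cong_less_modulus_unique_nat by blast
qed

lemma bij_mult: assumes c: "c \<in> G" shows "bij_betw (\<lambda>a. c * a mod N) G G"
proof -
  have inj: "inj_on (\<lambda>a. c * a mod N) G"
  proof (rule inj_onI)
    fix x y assume x: "x \<in> G" and y: "y \<in> G" and eq: "c * x mod N = c * y mod N"
    have "x < N" "y < N" using x y by (simp_all add: G_iff)
    then show "x = y" using cancel[OF c _ _ eq] by blast
  qed
  moreover have "(\<lambda>a. c * a mod N) ` G \<subseteq> G" using c by auto
  ultimately show ?thesis
    by (simp add: bij_betw_def card_image card_subset_eq)
qed


lemma G_cong_eq: "x \<in> G \<Longrightarrow> [x = y] (mod N) \<Longrightarrow> x = y mod N"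
  by (simp add: cong_def)

section \<open>characters\<close>

lemma chi_one: "\<chi> \<in> dirichlet_chars N \<Longrightarrow> \<chi> 1 = 1"
  by (simp add: dirichlet_chars_def)

lemma chi_one': "\<chi> \<in> dirichlet_chars N \<Longrightarrow> \<chi> (Suc 0) = 1"
  by (simp add: dirichlet_chars_def)

lemma chi_mult: "\<chi> \<in> dirichlet_chars N \<Longrightarrow> a \<in> G \<Longrightarrow> b \<in> G \<Longrightarrow> \<chi> (a * b mod N) = \<chi> a * \<chi> b"
  by (simp add: dirichlet_chars_def)

lemma chi_out: "\<chi> \<in> dirichlet_chars N \<Longrightarrow> a \<notin> G \<Longrightarrow> \<chi> a = 0"
  by (simp add: dirichlet_chars_def)

lemma chi_pow: assumes "\<chi> \<in> dirichlet_chars N" "a \<in> G" shows "\<chi> (a ^ n mod N) = \<chi> a ^ n"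
proof (induction n)
  case 0 then show ?case using N1 assms chi_one by simp
next
  case (Suc n)
  have "a ^ Suc n mod N = a * (a ^ n mod N) mod N" by (simp add: mod_mult_right_eq)
  then show ?case using Suc assms chi_mult[OF assms(1) assms(2) G_pow[OF assms(2)]] by simp
qed

lemma inv_unique: "(u::'a::comm_ring_1) * x = 1 \<Longrightarrow> v * x = 1 \<Longrightarrow> u = v"
  by (metis mult.assoc mult.commute mult_1_right)

lemma ci_G: "a \<in> G \<Longrightarrow> char_inv N \<chi> a = \<chi> (minv N a)"
  by (simp add: char_inv_def)

lemma ci_out: "a \<notin> G \<Longrightarrow> char_inv N \<chi> a = 0"
  by (simp add: char_inv_def)

lemma ci_mul: assumes "\<chi> \<in> dirichlet_chars N" "a \<in> G" shows "char_inv N \<chi> a * \<chi> a = 1"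
proof -
  have "\<chi> (a * minv N a mod N) = \<chi> a * \<chi> (minv N a)"
    using assms by (intro chi_mult) simp_all
  then show ?thesis using assms chi_one[OF assms(1)] by (simp add: ci_G mult.commute)
qed

lemma chi_unit: assumes "\<chi> \<in> dirichlet_chars N" "a \<in> G" shows "(\<chi> a :: 'a::idom) \<noteq> 0"
  using ci_mul[OF assms] by auto

lemma ci_X: assumes X: "\<chi> \<in> dirichlet_chars N" shows "char_inv N \<chi> \<in> dirichlet_chars N"
proof -
  have 1: "char_inv N \<chi> 1 = 1"
    using ci_mul[OF X one_G] chi_one[OF X] by simp
  have 2: "char_inv N \<chi> (a * b mod N) = char_inv N \<chi> a * char_inv N \<chi> b" if "a \<in> G" "b \<in> G" for a b
  proof (rule inv_unique)
    show "char_inv N \<chi> (a * b mod N) * \<chi> (a * b mod N) = 1" using that X by (simp add: ci_mul)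
    have "char_inv N \<chi> a * char_inv N \<chi> b * \<chi> (a * b mod N)
          = (char_inv N \<chi> a * \<chi> a) * (char_inv N \<chi> b * \<chi> b)"
      using that X by (simp add: chi_mult algebra_simps)
    then show "char_inv N \<chi> a * char_inv N \<chi> b * \<chi> (a * b mod N) = 1"
      using that X by (simp add: ci_mul)
  qed
  show ?thesis using 1 2 by (auto simp: dirichlet_chars_def ci_out)
qed

lemma prod_X: assumes "\<chi> \<in> dirichlet_chars N" "\<psi> \<in> dirichlet_chars N"
  shows "(\<lambda>a. \<chi> a * \<psi> a) \<in> dirichlet_chars N"
  using assms by (auto simp: dirichlet_chars_def)

lemma triv_X: "(\<lambda>a. if a \<in> G then 1 else 0) \<in> dirichlet_chars N"
  by (auto simp: dirichlet_chars_def)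

lemma sumG: assumes X: "\<rho> \<in> dirichlet_chars N"
  shows "(\<Sum>c\<in>G. \<rho> c) = (if \<forall>c\<in>G. \<rho> c = 1 then of_nat e else (0::'a::idom))"
proof (cases "\<forall>c\<in>G. \<rho> c = 1")
  case True
  then have "(\<Sum>c\<in>G. \<rho> c) = (\<Sum>c\<in>G. 1)" by simp
  then show ?thesis using True by (simp add: card_G)
next
  case False
  then obtain c0 where c0: "c0 \<in> G" "\<rho> c0 \<noteq> 1" by auto
  have "(\<Sum>c\<in>G. \<rho> c) = (\<Sum>c\<in>G. \<rho> (c0 * c mod N))"
    using sum.reindex_bij_betw[OF bij_mult[OF c0(1)], of \<rho>] by simp
  also have "\<dots> = \<rho> c0 * (\<Sum>c\<in>G. \<rho> c)"
    using X c0 by (simp add: chi_mult sum_distrib_left)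
  finally have "(1 - \<rho> c0) * (\<Sum>c\<in>G. \<rho> c) = 0" by (simp add: algebra_simps)
  then have "(\<Sum>c\<in>G. \<rho> c) = 0" using c0 by simp
  then show ?thesis by (simp only: if_not_P[OF False])
qed

end

locale chars = grp N for N +
  fixes \<zeta> :: "'a::idom"
  assumes zeta1: "\<zeta> ^ totient N = 1"
    and zprim: "\<And>k. 0 < k \<Longrightarrow> k < totient N \<Longrightarrow> \<zeta> ^ k \<noteq> 1"
begin

lemma zeta_mod: "\<zeta> ^ n = \<zeta> ^ (n mod e)"
proof -
  have "\<zeta> ^ n = \<zeta> ^ (e * (n div e) + n mod e)" by simp
  also have "\<dots> = \<zeta> ^ (n mod e)" by (simp only: power_add power_mult zeta1) simp
  finally show ?thesis .
qed

lemma zeta_one_iff: "\<zeta> ^ n = 1 \<longleftrightarrow> e dvd n"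
proof
  assume "\<zeta> ^ n = 1"
  then have "\<zeta> ^ (n mod e) = 1" by (simp add: zeta_mod[symmetric])
  then have "n mod e = 0" using zprim[of "n mod e"] e_pos by (metis mod_less_divisor neq0_conv)
  then show "e dvd n" by auto
next
  assume "e dvd n" then show "\<zeta> ^ n = 1" by (auto simp: power_mult zeta1)
qed

definition subgrp :: "nat set \<Rightarrow> bool" where
  "subgrp H \<longleftrightarrow> H \<subseteq> G \<and> 1 \<in> H \<and> (\<forall>x\<in>H. \<forall>y\<in>H. x * y mod N \<in> H)"

definition zchar :: "nat set \<Rightarrow> (nat \<Rightarrow> 'a) \<Rightarrow> bool" where
  "zchar H f \<longleftrightarrow> f 1 = 1 \<and> (\<forall>x\<in>H. \<forall>y\<in>H. f (x * y mod N) = f x * f y) \<and> (\<forall>x\<in>H. \<exists>k. f x = \<zeta> ^ k)"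

definition Y :: "(nat \<Rightarrow> 'a) set" where
  "Y = {\<chi> \<in> dirichlet_chars N. \<forall>a\<in>G. \<exists>k. \<chi> a = \<zeta> ^ k}"

lemma sub_pow: assumes "subgrp H" "x \<in> H" shows "x ^ n mod N \<in> H"
proof (induction n)
  case 0 then show ?case using assms N1 by (simp add: subgrp_def)
next
  case (Suc n)
  have "x ^ Suc n mod N = x * (x ^ n mod N) mod N" by (simp add: mod_mult_right_eq)
  then show ?case using Suc assms by (simp add: subgrp_def)
qed

lemma sub_G: "subgrp H \<Longrightarrow> x \<in> H \<Longrightarrow> x \<in> G"
  by (auto simp: subgrp_def)

lemma sub_mult: "subgrp H \<Longrightarrow> x \<in> H \<Longrightarrow> y \<in> H \<Longrightarrow> x * y mod N \<in> H"
  by (auto simp: subgrp_def)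

lemma f_pow: assumes "subgrp H" "zchar H f" "x \<in> H" shows "f (x ^ n mod N) = f x ^ n"
proof (induction n)
  case 0 then show ?case using assms N1 by (simp add: zchar_def)
next
  case (Suc n)
  have "x ^ Suc n mod N = x * (x ^ n mod N) mod N" by (simp add: mod_mult_right_eq)
  then show ?case using Suc assms sub_pow[OF assms(1,3)] by (simp add: zchar_def)
qed


lemma mulcomb: "(h1 * x ^ i mod N) * (h2 * x ^ j mod N) mod N = (h1 * h2 mod N) * x ^ (i + j) mod N"
proof -
  have "(h1 * x ^ i mod N) * (h2 * x ^ j mod N) mod N = (h1 * x ^ i) * (h2 * x ^ j) mod N"
    by (simp add: mod_mult_eq)
  also have "\<dots> = (h1 * h2) * x ^ (i + j) mod N" by (simp add: power_add ac_simps)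
  also have "\<dots> = (h1 * h2 mod N) * x ^ (i + j) mod N" by (simp add: mod_mult_left_eq)
  finally show ?thesis .
qed

lemma inv_in: assumes "subgrp H" "y \<in> H"
  shows "y ^ (e - 1) mod N \<in> H" "y * (y ^ (e - 1) mod N) mod N = 1"
  using assms sub_pow inv_ex sub_G by auto

lemma I_add: assumes "subgrp H" "x ^ a mod N \<in> H" "x ^ b mod N \<in> H" shows "x ^ (a + b) mod N \<in> H"
proof -
  have "x ^ (a + b) mod N = (x ^ a mod N) * (x ^ b mod N) mod N" by (simp add: power_add mod_mult_eq)
  then show ?thesis using assms sub_mult by simp
qed

lemma I_sub: assumes H: "subgrp H" and a: "x ^ a mod N \<in> H" and ak: "x ^ (a + k) mod N \<in> H"
  shows "x ^ k mod N \<in> H"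
proof -
  define y where "y = x ^ a mod N"
  define z where "z = y ^ (e - 1) mod N"
  have z: "z \<in> H" "y * z mod N = 1" using inv_in[OF H, of y] a by (simp_all add: y_def z_def)
  have "(x ^ (a + k) mod N) * z mod N = x ^ (a + k) * z mod N"
    by (simp add: mod_mult_left_eq)
  also have "\<dots> = x ^ k * (x ^ a * z) mod N"
    by (simp add: power_add ac_simps)
  also have "\<dots> = x ^ k * (x ^ a * z mod N) mod N" by (simp add: mod_mult_right_eq)
  also have "x ^ a * z mod N = y * z mod N" by (simp add: y_def mod_mult_left_eq)
  finally have "(x ^ (a + k) mod N) * z mod N = x ^ k mod N" using z by simp
  then show ?thesis using sub_mult[OF H ak z(1)] by simp
qed

lemma exists_m: assumes H: "subgrp H" and x: "x \<in> G"
  shows "\<exists>m>0. m dvd e \<and> (\<forall>n. x ^ n mod N \<in> H \<longleftrightarrow> m dvd n)"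
proof -
  define m where "m = (LEAST n. 0 < n \<and> x ^ n mod N \<in> H)"
  have eI: "0 < e \<and> x ^ e mod N \<in> H" using euler[OF x] e_pos H by (simp add: subgrp_def)
  have m: "0 < m" "x ^ m mod N \<in> H"
    using LeastI[of "\<lambda>n. 0 < n \<and> x ^ n mod N \<in> H", OF eI] unfolding m_def by blast+
  have mless: "\<not> (0 < n \<and> x ^ n mod N \<in> H)" if "n < m" for n
    using not_less_Least[of n "\<lambda>n. 0 < n \<and> x ^ n mod N \<in> H"] that unfolding m_def by blast
  have fwd: "m dvd n" if "x ^ n mod N \<in> H" for n
    using that
  proof (induction n rule: less_induct)
    case (less n)
    show ?case
    proof (cases "n < m")
      case True
      have "\<not> (0 < n \<and> x ^ n mod N \<in> H)" by (rule mless[OF True])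
      then have "n = 0" using less.prems by simp
      then show ?thesis by simp
    next
      case False
      then have nn: "n = m + (n - m)" by simp
      have "x ^ (m + (n - m)) mod N \<in> H" using less.prems nn by simp
      then have "x ^ (n - m) mod N \<in> H" using I_sub[OF H m(2)] by blast
      then have "m dvd (n - m)" using less.IH[of "n - m"] m(1) False by simp
      then show ?thesis using nn dvd_add[OF dvd_refl[of m]] by metis
    qed
  qed
  have bwd: "x ^ n mod N \<in> H" if md: "m dvd n" for n
  proof -
    obtain q where q: "n = m * q" using md by blast
    have "x ^ n mod N = (x ^ m mod N) ^ q mod N" by (simp add: q power_mult power_mod)
    then show ?thesis using sub_pow[OF H m(2)] by simp
  qed
  show ?thesis using m(1) fwd eI bwd by blast
qed

lemma root: assumes H: "subgrp H" and f: "zchar H f" and m: "0 < m" "m dvd e"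
    and xm: "x ^ m mod N \<in> H" and xG: "x \<in> G"
  shows "\<exists>l. (\<zeta> ^ l) ^ m = f (x ^ m mod N)"
proof -
  obtain k where k: "f (x ^ m mod N) = \<zeta> ^ k" using f xm by (auto simp: zchar_def)
  obtain q where q: "e = m * q" using m(2) by blast
  have qpos: "q > 0" using q e_pos by (cases q) auto
  have "f (x ^ m mod N) ^ q = f ((x ^ m mod N) ^ q mod N)" using f_pow[OF H f xm] by simp
  also have "(x ^ m mod N) ^ q mod N = x ^ e mod N" by (simp add: q power_mult power_mod)
  also have "\<dots> = 1" using euler[OF xG] .
  finally have "\<zeta> ^ (k * q) = 1" using f k by (simp add: zchar_def power_mult)
  then have "m * q dvd k * q" using zeta_one_iff q by simp
  then have "m dvd k" using qpos by simp
  then obtain l where "k = m * l" by blast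
  then have "(\<zeta> ^ l) ^ m = f (x ^ m mod N)" using k by (simp add: power_mult[symmetric] mult.commute)
  then show ?thesis by blast
qed


lemma step: assumes H: "subgrp H" and f: "zchar H f" and x: "x \<in> G"
    and mI: "\<forall>n. x ^ n mod N \<in> H \<longleftrightarrow> m dvd n"
    and w: "w ^ m = f (x ^ m mod N)" and wz: "w = \<zeta> ^ l"
  shows "\<exists>H' f'. subgrp H' \<and> zchar H' f' \<and> H \<subseteq> H' \<and> x \<in> H' \<and> (\<forall>h\<in>H. f' h = f h) \<and> f' x = w"
proof -
  have xc: "coprime x N" using x by (simp add: G_iff)
  have fm: "f (y * z mod N) = f y * f z" if "y \<in> H" "z \<in> H" for y z
    using f that by (simp add: zchar_def)
  have wd0: "f h * w ^ i = f h' * w ^ j"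
    if hh: "h \<in> H" "h' \<in> H" and eq: "h * x ^ i mod N = h' * x ^ j mod N" and ij: "i \<le> j" for h h' i j
  proof -
    define d where "d = j - i"
    have j: "j = i + d" using ij by (simp add: d_def)
    have c: "coprime (x ^ i) N" using xc by simp
    have "[x ^ i * h = x ^ i * (h' * x ^ d)] (mod N)"
      using eq by (simp add: cong_def j power_add ac_simps)
    then have "[h = h' * x ^ d] (mod N)" using cong_mult_lcancel_nat[OF c] by blast
    then have h1: "h = h' * x ^ d mod N" using hh H sub_G G_cong_eq by blast
    then have h2: "h = h' * (x ^ d mod N) mod N" by (simp add: mod_mult_right_eq)
    define z where "z = h' ^ (e - 1) mod N"
    have z: "z \<in> H" "h' * z mod N = 1" using inv_in[OF H hh(2)] by (simp_all add: z_def)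
    have "z * h mod N = z * (h' * x ^ d) mod N" using h1 by (simp add: mod_mult_right_eq)
    also have "\<dots> = (h' * z) * x ^ d mod N" by (simp add: ac_simps)
    also have "\<dots> = (h' * z mod N) * x ^ d mod N" by (simp add: mod_mult_left_eq)
    also have "\<dots> = x ^ d mod N" using z by simp
    finally have "x ^ d mod N \<in> H" using sub_mult[OF H z(1) hh(1)] by simp
    then have "m dvd d" using mI by blast
    then obtain q where q: "d = m * q" by blast
    have xd: "x ^ d mod N = (x ^ m mod N) ^ q mod N" by (simp add: q power_mult power_mod)
    have xmH: "x ^ m mod N \<in> H" using mI by simp
    have "f (x ^ d mod N) = f (x ^ m mod N) ^ q" using f_pow[OF H f xmH] xd by simp
    also have "\<dots> = w ^ d" using w by (simp add: q power_mult)
    finally have fxd: "f (x ^ d mod N) = w ^ d" .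
    have "f h = f h' * w ^ d" using h2 fm[OF hh(2) \<open>x ^ d mod N \<in> H\<close>] fxd by simp
    then show ?thesis by (simp add: j power_add ac_simps)
  qed
  have wd: "f h * w ^ i = f h' * w ^ j"
    if "h \<in> H" "h' \<in> H" "h * x ^ i mod N = h' * x ^ j mod N" for h h' i j
  proof (cases "i \<le> j")
    case True then show ?thesis using wd0 that by blast
  next
    case False then show ?thesis using wd0[of h' h j i] that by simp
  qed
  define H' where "H' = {y. \<exists>h\<in>H. \<exists>i. y = h * x ^ i mod N}"
  define f' where "f' y = (SOME v. \<exists>h\<in>H. \<exists>i. y = h * x ^ i mod N \<and> v = f h * w ^ i)" for y
  have f'eq: "f' (h * x ^ i mod N) = f h * w ^ i" if h: "h \<in> H" for h i
  proof -
    have ex: "\<exists>v. \<exists>h2\<in>H. \<exists>i2. h * x ^ i mod N = h2 * x ^ i2 mod N \<and> v = f h2 * w ^ i2"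
      using h by blast
    from someI_ex[OF ex] obtain h2 i2 where "h2 \<in> H" "h * x ^ i mod N = h2 * x ^ i2 mod N"
      "f' (h * x ^ i mod N) = f h2 * w ^ i2"
      unfolding f'_def by blast
    then show ?thesis using wd[OF h] by metis
  qed
  have sH': "subgrp H'"
    unfolding subgrp_def
  proof (intro conjI ballI subsetI)
    fix y assume "y \<in> H'"
    then obtain h i where "h \<in> H" "y = h * x ^ i mod N" by (auto simp: H'_def)
    moreover have "h * x ^ i mod N = h * (x ^ i mod N) mod N" by (simp add: mod_mult_right_eq)
    ultimately show "y \<in> G" using H x sub_G by simp
  next
    have "1 = 1 * x ^ 0 mod N" using N1 by simp
    then show "1 \<in> H'" using H unfolding H'_def subgrp_def by blast
  next
    fix y z assume "y \<in> H'" "z \<in> H'"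
    then obtain h1 i h2 j where "h1 \<in> H" "y = h1 * x ^ i mod N" "h2 \<in> H" "z = h2 * x ^ j mod N"
      by (auto simp: H'_def)
    then show "y * z mod N \<in> H'" using mulcomb[of h1 x i h2 j] sub_mult[OF H]
      unfolding H'_def by blast
  qed
  have hH: "h \<in> H'" "f' h = f h" if "h \<in> H" for h
  proof -
    have e0: "h = h * x ^ 0 mod N" using that H sub_G by simp
    show "h \<in> H'" unfolding H'_def using that e0 by blast
    have "f' (h * x ^ 0 mod N) = f h" using f'eq[OF that, of 0] by simp
    moreover have "f' h = f' (h * x ^ 0 mod N)" using e0 by (rule arg_cong)
    ultimately show "f' h = f h" by simp
  qed
  have zc: "zchar H' f'"
    unfolding zchar_def
  proof (intro conjI ballI)
    show "f' 1 = 1" using hH[of 1] H f by (simp add: subgrp_def zchar_def)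
  next
    fix y z assume "y \<in> H'" "z \<in> H'"
    then obtain h1 i h2 j where hs: "h1 \<in> H" "y = h1 * x ^ i mod N" "h2 \<in> H" "z = h2 * x ^ j mod N"
      by (auto simp: H'_def)
    have "f' (y * z mod N) = f' ((h1 * h2 mod N) * x ^ (i + j) mod N)" using hs mulcomb by simp
    also have "\<dots> = f (h1 * h2 mod N) * w ^ (i + j)" using f'eq sub_mult[OF H hs(1,3)] by blast
    also have "\<dots> = (f h1 * w ^ i) * (f h2 * w ^ j)" using fm[OF hs(1,3)] by (simp add: power_add ac_simps)
    also have "\<dots> = f' y * f' z" using hs f'eq by simp
    finally show "f' (y * z mod N) = f' y * f' z" .
  next
    fix y assume "y \<in> H'"
    then obtain h i where hs: "h \<in> H" "y = h * x ^ i mod N" by (auto simp: H'_def)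
    obtain k where "f h = \<zeta> ^ k" using f hs by (auto simp: zchar_def)
    then have "f' y = \<zeta> ^ (k + l * i)" using hs f'eq wz by (simp add: power_add power_mult)
    then show "\<exists>k. f' y = \<zeta> ^ k" by blast
  qed
  have xH': "x \<in> H'" "f' x = w"
  proof -
    have e1: "x = 1 * x ^ 1 mod N" using x by simp
    have one: "1 \<in> H" using H by (simp add: subgrp_def)
    show "x \<in> H'" unfolding H'_def using e1 one by blast
    have "f' (1 * x ^ 1 mod N) = w" using f'eq[OF one, of 1] f by (simp add: zchar_def)
    moreover have "f' x = f' (1 * x ^ 1 mod N)" using e1 by (rule arg_cong)
    ultimately show "f' x = w" by simp
  qed
  show ?thesis using sH' zc hH xH' by blast
qed

lemma extend: "subgrp H \<Longrightarrow> zchar H f \<Longrightarrow> \<exists>\<chi>\<in>Y. \<forall>h\<in>H. \<chi> h = f h"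
proof (induction "card (G - H)" arbitrary: H f rule: less_induct)
  case less
  show ?case
  proof (cases "G \<subseteq> H")
    case True
    then have HG: "H = G" using less.prems by (auto simp: subgrp_def)
    define \<chi> where "\<chi> a = (if a \<in> G then f a else 0)" for a
    have "\<chi> \<in> Y" using less.prems HG
      by (auto simp: Y_def dirichlet_chars_def \<chi>_def zchar_def)
    moreover have "\<forall>h\<in>H. \<chi> h = f h" using HG by (simp add: \<chi>_def)
    ultimately show ?thesis by blast
  next
    case False
    then obtain x where x: "x \<in> G" "x \<notin> H" by blast
    obtain m where m: "0 < m" "m dvd e" "\<forall>n. x ^ n mod N \<in> H \<longleftrightarrow> m dvd n"
      using exists_m[OF less.prems(1) x(1)] by blast
    obtain l where l: "(\<zeta> ^ l) ^ m = f (x ^ m mod N)"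
    proof -
      have "x ^ m mod N \<in> H" using m(3) by simp
      from root[OF less.prems m(1,2) this x(1)] show ?thesis using that by blast
    qed
    obtain H' f' where st: "subgrp H'" "zchar H' f'" "H \<subseteq> H'" "x \<in> H'" "\<forall>h\<in>H. f' h = f h"
      using step[OF less.prems x(1) m(3) l refl] by metis
    have "G - H' \<subset> G - H" using st(3,4) x by blast
    then have "card (G - H') < card (G - H)" by (simp add: psubset_card_mono)
    then obtain \<chi> where "\<chi> \<in> Y" "\<forall>h\<in>H'. \<chi> h = f' h" using less.hyps st(1,2) by blast
    then show ?thesis using st(3,5) by (metis subsetD)
  qed
qed

lemma separate: assumes a: "a \<in> G" "a \<noteq> 1" shows "\<exists>\<chi>\<in>Y. \<chi> a \<noteq> 1"
proof -
  have H0: "subgrp {1}" using N1 by (simp add: subgrp_def)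
  have f0: "zchar {1} (\<lambda>_. 1)" 
  proof -
    have "\<exists>k. \<zeta> ^ k = 1" by (rule exI[of _ 0]) simp
    then show ?thesis unfolding zchar_def by auto
  qed
  obtain m where m: "0 < m" "m dvd e" "\<forall>n. a ^ n mod N \<in> {1} \<longleftrightarrow> m dvd n"
    using exists_m[OF H0 a(1)] by blast
  have "m \<noteq> 1" using m(3)[rule_format, of 1] a by simp
  then have m1: "m > 1" using m(1) by simp
  obtain q where q: "e = m * q" using m(2) by blast
  have q0: "0 < q" using q e_pos by (cases q) auto
  have qe: "q < e" using q m1 q0 by simp
  define w where "w = \<zeta> ^ q"
  have "w ^ m = \<zeta> ^ e" using q by (simp add: w_def power_mult[symmetric] mult.commute)
  then have w1: "w ^ m = 1" using zeta1 by simp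
  have wn: "w \<noteq> 1" using zprim[OF q0 qe] by (simp add: w_def)
  obtain H' f' where st: "subgrp H'" "zchar H' f'" "a \<in> H'" "f' a = w"
    using step[OF H0 f0 a(1) m(3), of w q] w1 w_def by blast
  obtain \<chi> where c: "\<chi> \<in> Y" "\<forall>h\<in>H'. \<chi> h = f' h" using extend[OF st(1,2)] by blast
  have "\<chi> a = w" using c(2) st(3,4) by simp
  then show ?thesis using c(1) wn by blast
qed


lemma Y_X: "\<chi> \<in> Y \<Longrightarrow> \<chi> \<in> dirichlet_chars N"
  by (simp add: Y_def)

lemma finite_Y: "finite Y"
proof -
  define Z where "Z = (\<lambda>k. \<zeta> ^ k) ` {..<e}"
  define ext where "ext f = (\<lambda>a. if a \<in> G then f a else (0::'a))" for f :: "nat \<Rightarrow> 'a"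
  have "Y \<subseteq> ext ` (PiE G (\<lambda>_. Z))"
  proof
    fix \<chi> assume c: "\<chi> \<in> Y"
    have "\<chi> = ext (restrict \<chi> G)"
      using c by (auto simp: ext_def Y_def chi_out)
    moreover have "restrict \<chi> G \<in> PiE G (\<lambda>_. Z)"
    proof
      fix a assume a: "a \<in> G"
      then obtain k where "\<chi> a = \<zeta> ^ k" using c by (auto simp: Y_def)
      then have "\<chi> a = \<zeta> ^ (k mod e)" using zeta_mod by simp
      moreover have "k mod e < e" using e_pos by simp
      ultimately show "restrict \<chi> G a \<in> Z" using a by (simp add: Z_def)
    qed simp
    ultimately show "\<chi> \<in> ext ` (PiE G (\<lambda>_. Z))" by blast
  qed
  moreover have "finite (PiE G (\<lambda>_. Z))" by (simp add: Z_def finite_PiE)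
  ultimately show ?thesis by (meson finite_imageI finite_subset)
qed

definition triv :: "nat \<Rightarrow> 'a" where "triv a = (if a \<in> G then 1 else 0)"

lemma triv_Y: "triv \<in> Y"
proof -
  have "\<exists>k. (1::'a) = \<zeta> ^ k" by (rule exI[of _ 0]) simp
  moreover have "triv = (\<lambda>a. if a \<in> G then 1 else 0)" by (simp add: fun_eq_iff triv_def)
  ultimately show ?thesis using triv_X by (auto simp: Y_def)
qed

lemma triv_iff: "\<chi> \<in> dirichlet_chars N \<Longrightarrow> (\<forall>c\<in>G. \<chi> c = 1) \<longleftrightarrow> \<chi> = triv"
  by (auto simp: triv_def chi_out)

lemma prod_Y: assumes "\<chi> \<in> Y" "\<psi> \<in> Y" shows "(\<lambda>a. \<chi> a * \<psi> a) \<in> Y"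
proof -
  have "(\<lambda>a. \<chi> a * \<psi> a) \<in> dirichlet_chars N" using assms prod_X Y_X by blast
  moreover have "\<exists>k. \<chi> a * \<psi> a = \<zeta> ^ k" if aG: "a \<in> G" for a
  proof -
    obtain k1 k2 where "\<chi> a = \<zeta> ^ k1" "\<psi> a = \<zeta> ^ k2" using assms aG unfolding Y_def by blast
    then have "\<chi> a * \<psi> a = \<zeta> ^ (k1 + k2)" by (simp add: power_add)
    then show ?thesis by blast
  qed
  ultimately show ?thesis by (simp add: Y_def)
qed

lemma S_Y: assumes z: "z \<in> G" shows "(\<Sum>\<chi>\<in>Y. \<chi> z) = (if z = 1 then of_nat (card Y) else 0)"
proof (cases "z = 1")
  case True
  have "(\<Sum>\<chi>\<in>Y. \<chi> z) = (\<Sum>\<chi>\<in>Y. 1)" using True by (intro sum.cong) (auto simp: Y_def chi_one chi_one')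
  then show ?thesis using True by simp
next
  case False
  obtain \<chi>0 where c0: "\<chi>0 \<in> Y" "\<chi>0 z \<noteq> 1" using separate[OF z False] by blast
  define T where "T \<chi> = (\<lambda>a. \<chi>0 a * \<chi> a)" for \<chi> :: "nat \<Rightarrow> 'a"
  have inj: "inj_on T Y"
  proof (rule inj_onI)
    fix \<chi> \<psi> assume a: "\<chi> \<in> Y" "\<psi> \<in> Y" "T \<chi> = T \<psi>"
    show "\<chi> = \<psi>"
    proof
      fix a show "\<chi> a = \<psi> a"
      proof (cases "a \<in> G")
        case True
        have "\<chi>0 a * \<chi> a = \<chi>0 a * \<psi> a" using a(3) unfolding T_def by meson
        moreover have "\<chi>0 a \<noteq> 0" using chi_unit[OF Y_X[OF c0(1)] True] .
        ultimately show ?thesis by simp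
      next
        case False then show ?thesis using a Y_X chi_out by metis
      qed
    qed
  qed
  have sub: "T ` Y \<subseteq> Y" using prod_Y[OF c0(1)] by (auto simp: T_def)
  have bij: "bij_betw T Y Y"
    using inj sub finite_Y by (simp add: bij_betw_def card_image card_subset_eq)
  have "(\<Sum>\<chi>\<in>Y. \<chi> z) = (\<Sum>\<chi>\<in>Y. T \<chi> z)"
    using sum.reindex_bij_betw[OF bij, of "\<lambda>\<chi>. \<chi> z"] by simp
  also have "\<dots> = \<chi>0 z * (\<Sum>\<chi>\<in>Y. \<chi> z)" by (simp add: T_def sum_distrib_left)
  finally have "(1 - \<chi>0 z) * (\<Sum>\<chi>\<in>Y. \<chi> z) = 0" by (simp add: algebra_simps)
  then have "(\<Sum>\<chi>\<in>Y. \<chi> z) = 0" using c0 by simp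
  then show ?thesis by (simp only: if_not_P[OF False])
qed

lemma card_Y: "(of_nat (card Y) :: 'a) = of_nat e"
proof -
  have "(\<Sum>z\<in>G. \<Sum>\<chi>\<in>Y. \<chi> z) = (\<Sum>z\<in>G. if z = 1 then of_nat (card Y) else (0::'a))"
    by (intro sum.cong) (simp_all add: S_Y)
  also have "\<dots> = of_nat (card Y)" by (simp add: sum.delta)
  finally have 1: "(\<Sum>z\<in>G. \<Sum>\<chi>\<in>Y. \<chi> z) = of_nat (card Y)" .
  have "(\<Sum>\<chi>\<in>Y. \<Sum>z\<in>G. \<chi> z) = (\<Sum>\<chi>\<in>Y. if \<chi> = triv then of_nat e else (0::'a))"
    by (intro sum.cong) (simp_all add: sumG Y_X triv_iff)
  also have "\<dots> = of_nat e" using triv_Y finite_Y by (simp add: sum.delta')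
  finally have 2: "(\<Sum>\<chi>\<in>Y. \<Sum>z\<in>G. \<chi> z) = of_nat e" .
  have "(\<Sum>z\<in>G. \<Sum>\<chi>\<in>Y. \<chi> z) = (\<Sum>\<chi>\<in>Y. \<Sum>z\<in>G. \<chi> z)" by (rule sum.swap)
  then show ?thesis using 1 2 by simp
qed

lemma K: assumes a: "a \<in> G" "a' \<in> G"
  shows "(\<Sum>\<chi>\<in>Y. \<chi> a * char_inv N \<chi> a') = (if a = a' then of_nat e else 0)"
proof -
  define z where "z = a * minv N a' mod N"
  have zG: "z \<in> G" using a by (simp add: z_def)
  have "(\<Sum>\<chi>\<in>Y. \<chi> a * char_inv N \<chi> a') = (\<Sum>\<chi>\<in>Y. \<chi> z)"
    by (intro sum.cong) (simp_all add: z_def ci_G a chi_mult Y_X)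
  also have "\<dots> = (if z = 1 then of_nat e else 0)" using S_Y[OF zG] card_Y by simp
  also have "(z = 1) = (a = a')"
  proof
    assume "z = 1"
    then have "minv N a' * a mod N = minv N a' * a' mod N"
      using a by (simp add: z_def mult.commute)
    moreover have "minv N a' \<in> G" using a by simp
    moreover have "a < N" "a' < N" using a by (simp_all add: G_iff)
    ultimately show "a = a'" using cancel by blast
  next
    assume "a = a'" then show "z = 1" using a by (simp add: z_def)
  qed
  finally show ?thesis .
qed


end

lemma sum4_swap:
  "(\<Sum>x\<in>A. \<Sum>y\<in>B. \<Sum>u\<in>C. \<Sum>v\<in>D. f x y u v) = (\<Sum>u\<in>C. \<Sum>v\<in>D. \<Sum>x\<in>A. \<Sum>y\<in>B. f x y u v)"
proof -
  have "(\<Sum>x\<in>A. \<Sum>y\<in>B. \<Sum>u\<in>C. \<Sum>v\<in>D. f x y u v) = (\<Sum>x\<in>A. \<Sum>u\<in>C. \<Sum>y\<in>B. \<Sum>v\<in>D. f x y u v)"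
    by (intro sum.cong refl sum.swap)
  also have "\<dots> = (\<Sum>u\<in>C. \<Sum>x\<in>A. \<Sum>y\<in>B. \<Sum>v\<in>D. f x y u v)" by (rule sum.swap)
  also have "\<dots> = (\<Sum>u\<in>C. \<Sum>x\<in>A. \<Sum>v\<in>D. \<Sum>y\<in>B. f x y u v)"
    by (intro sum.cong refl sum.swap)
  also have "\<dots> = (\<Sum>u\<in>C. \<Sum>v\<in>D. \<Sum>x\<in>A. \<Sum>y\<in>B. f x y u v)"
    by (intro sum.cong refl sum.swap)
  finally show ?thesis .
qed

locale ms = chars N \<zeta> + Modules.module smul
  for N and \<zeta> :: "'a::idom" and smul :: "'a \<Rightarrow> 'm::ab_group_add \<Rightarrow> 'm" +
  fixes sb :: "nat \<Rightarrow> nat \<Rightarrow> 'm" and act :: "nat \<Rightarrow> 'm \<Rightarrow> 'm" and \<theta> :: "nat \<Rightarrow> 'a"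
  assumes einv: "\<exists>w. of_nat (totient N) * w = (1::'a)"
    and act_smul: "a \<in> units_mod N \<Longrightarrow> act a (smul c x) = smul c (act a x)"
    and act_add: "a \<in> units_mod N \<Longrightarrow> act a (x + y) = act a x + act a y"
    and act_sb: "a \<in> units_mod N \<Longrightarrow> unimod N u v \<Longrightarrow> act a (sb u v) = sb (a * u mod N) (a * v mod N)"
    and thetaX: "\<theta> \<in> dirichlet_chars N"
begin

abbreviation "iphi \<equiv> (nat_inv e :: 'a)"

lemma iphi: "of_nat e * iphi = 1"
proof -
  obtain w where w: "of_nat e * w = (1::'a)" using einv by blast
  have "nat_inv e = w" unfolding nat_inv_def
  proof (rule the_equality)
    show "of_nat e * w = 1" by (rule w)
    fix v assume "of_nat e * v = (1::'a)"
    then show "v = w" using w inv_unique[of v "of_nat e" w] by (simp add: mult.commute)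
  qed
  then show ?thesis using w by simp
qed

lemma act_sum: "a \<in> G \<Longrightarrow> act a (sum f A) = (\<Sum>x\<in>A. act a (f x))"
proof -
  assume a: "a \<in> G"
  interpret additive "act a" by standard (rule act_add[OF a])
  show ?thesis by (rule sum)
qed

abbreviation "al g h \<chi> \<psi> \<equiv> alpha smul sb N g h \<chi> \<psi>"
abbreviation "E \<equiv> e_proj smul act N \<theta>"

lemma E_hom: "Modules.module_hom smul smul E"
proof (rule Modules.module_hom.intro)
  show "Modules.module smul" by (rule module_axioms)
  show "Modules.module smul" by (rule module_axioms)
  show "Modules.module_hom_axioms smul smul E"
  proof
    fix x y
    show "E (x + y) = E x + E y"
      by (simp add: e_proj_def act_add scale_right_distrib sum.distrib)
    fix r
    have "E (smul r x) = smul iphi (\<Sum>a\<in>G. smul r (smul (char_inv N \<theta> a) (act a x)))"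
      by (simp add: e_proj_def act_smul mult.commute)
    also have "\<dots> = smul iphi (smul r (\<Sum>a\<in>G. smul (char_inv N \<theta> a) (act a x)))"
      by (simp add: scale_sum_right)
    also have "\<dots> = smul r (E x)"
      unfolding e_proj_def by (rule scale_left_commute)
    finally show "E (smul r x) = smul r (E x)" .
  qed
qed

lemma unimod_ga: assumes gh: "coprime g h" and a: "a \<in> G" and b: "b \<in> G"
  shows "unimod N (g * a mod N) (h * b mod N)"
proof -
  define d where "d = gcd (gcd (g * a mod N) (h * b mod N)) N"
  have dN: "d dvd N" by (simp add: d_def)
  have "d dvd g * a mod N" unfolding d_def by (meson dvd_trans gcd_dvd1)
  then have "d dvd g * a" using dN by (simp add: dvd_mod_iff)
  moreover have "coprime d a" using a dN by (meson G_iff coprime_commute coprime_divisors dvd_refl)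
  ultimately have dg: "d dvd g" by (simp add: coprime_dvd_mult_left_iff)
  have "d dvd h * b mod N" unfolding d_def by (meson dvd_trans gcd_dvd1 gcd_dvd2)
  then have "d dvd h * b" using dN by (simp add: dvd_mod_iff)
  moreover have "coprime d b" using b dN by (meson G_iff coprime_commute coprime_divisors dvd_refl)
  ultimately have dh: "d dvd h" by (simp add: coprime_dvd_mult_left_iff)
  have "d = 1" by (rule coprime_common_divisor_nat[OF gh dg dh])
  then have "coprime (gcd (g * a mod N) (h * b mod N)) N" unfolding d_def coprime_iff_gcd_eq_1 .
  moreover have "g * a mod N < N" "h * b mod N < N" using N1 by simp_all
  ultimately show ?thesis unfolding unimod_def by blast
qed

lemma mm: "c * (g * a mod N) mod N = g * (c * a mod N) mod N"
  by (metis mod_mult_right_eq mult.left_commute)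

lemma ci_shift: assumes X: "\<chi> \<in> dirichlet_chars N" and c: "c \<in> G" and a: "a \<in> G"
  shows "char_inv N \<chi> a = \<chi> c * char_inv N \<chi> (c * a mod N)"
proof (rule inv_unique)
  show "char_inv N \<chi> a * \<chi> a = 1" using ci_mul[OF X a] .
  have "\<chi> c * char_inv N \<chi> (c * a mod N) * \<chi> a = char_inv N \<chi> (c * a mod N) * \<chi> (c * a mod N)"
    using chi_mult[OF X c a] by (simp add: ac_simps)
  then show "\<chi> c * char_inv N \<chi> (c * a mod N) * \<chi> a = 1" using ci_mul[OF X G_mult[OF c a]] by simp
qed

lemma act_alpha: assumes c: "c \<in> G" and X: "\<chi> \<in> dirichlet_chars N" "\<psi> \<in> dirichlet_chars N"
    and gh: "coprime g h"
  shows "act c (al g h \<chi> \<psi>) = smul (\<chi> c * \<psi> c) (al g h \<chi> \<psi>)"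
proof -
  define F where "F a b = smul (char_inv N \<chi> a * char_inv N \<psi> b) (sb (g * a mod N) (h * b mod N))" for a b
  have al: "al g h \<chi> \<psi> = smul (iphi ^ 2) (\<Sum>a\<in>G. \<Sum>b\<in>G. F a b)" by (simp add: alpha_def F_def)
  have 1: "act c (F a b) = smul (\<chi> c * \<psi> c) (F (c * a mod N) (c * b mod N))" if "a \<in> G" "b \<in> G" for a b
  proof -
    have "act c (F a b) = smul (char_inv N \<chi> a * char_inv N \<psi> b)
              (sb (g * (c * a mod N) mod N) (h * (c * b mod N) mod N))"
      using that c gh by (simp add: F_def act_smul act_sb unimod_ga mm)
    also have "char_inv N \<chi> a * char_inv N \<psi> b
        = (\<chi> c * \<psi> c) * (char_inv N \<chi> (c * a mod N) * char_inv N \<psi> (c * b mod N))"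
      using ci_shift[OF X(1) c that(1)] ci_shift[OF X(2) c that(2)] by (simp add: ac_simps)
    finally show ?thesis by (simp add: F_def)
  qed
  have "act c (al g h \<chi> \<psi>) = smul (iphi ^ 2) (\<Sum>a\<in>G. \<Sum>b\<in>G. act c (F a b))"
    using c by (simp add: al act_smul act_sum)
  also have "\<dots> = smul (iphi ^ 2) (\<Sum>a\<in>G. \<Sum>b\<in>G. smul (\<chi> c * \<psi> c) (F (c * a mod N) (c * b mod N)))"
    using 1 by simp
  also have "(\<Sum>a\<in>G. \<Sum>b\<in>G. smul (\<chi> c * \<psi> c) (F (c * a mod N) (c * b mod N)))
      = smul (\<chi> c * \<psi> c) (\<Sum>a\<in>G. \<Sum>b\<in>G. F (c * a mod N) (c * b mod N))"
    by (simp add: scale_sum_right)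
  also have "(\<Sum>a\<in>G. \<Sum>b\<in>G. F (c * a mod N) (c * b mod N)) = (\<Sum>a\<in>G. \<Sum>b\<in>G. F (c * a mod N) b)"
  proof (rule sum.cong[OF refl])
    fix a show "(\<Sum>b\<in>G. F (c * a mod N) (c * b mod N)) = (\<Sum>b\<in>G. F (c * a mod N) b)"
      using sum.reindex_bij_betw[OF bij_mult[OF c], of "F (c * a mod N)"] by simp
  qed
  also have "\<dots> = (\<Sum>a\<in>G. \<Sum>b\<in>G. F a b)"
    using sum.reindex_bij_betw[OF bij_mult[OF c], of "\<lambda>a. \<Sum>b\<in>G. F a b"] by simp
  finally show ?thesis by (simp add: al mult.commute)
qed


lemma inversion: assumes a: "a \<in> G" and b: "b \<in> G"
  shows "sb (g * a mod N) (h * b mod N) = (\<Sum>\<chi>\<in>Y. \<Sum>\<psi>\<in>Y. smul (\<chi> a * \<psi> b) (al g h \<chi> \<psi>))"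
proof -
  define S where "S a' b' = sb (g * a' mod N) (h * b' mod N)" for a' b'
  define c where "c \<chi> \<psi> a' b' = \<chi> a * \<psi> b * (iphi ^ 2 * (char_inv N \<chi> a' * char_inv N \<psi> b'))"
    for \<chi> \<psi> :: "nat \<Rightarrow> 'a" and a' b'
  have al_exp: "al g h \<chi> \<psi> = (\<Sum>a'\<in>G. \<Sum>b'\<in>G. smul (iphi ^ 2 * (char_inv N \<chi> a' * char_inv N \<psi> b')) (S a' b'))"
    for \<chi> \<psi> by (simp add: alpha_def scale_sum_right S_def)
  have "(\<Sum>\<chi>\<in>Y. \<Sum>\<psi>\<in>Y. smul (\<chi> a * \<psi> b) (al g h \<chi> \<psi>))
      = (\<Sum>\<chi>\<in>Y. \<Sum>\<psi>\<in>Y. \<Sum>a'\<in>G. \<Sum>b'\<in>G. smul (c \<chi> \<psi> a' b') (S a' b'))"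
    by (simp add: al_exp scale_sum_right c_def)
  also have "\<dots> = (\<Sum>a'\<in>G. \<Sum>b'\<in>G. \<Sum>\<chi>\<in>Y. \<Sum>\<psi>\<in>Y. smul (c \<chi> \<psi> a' b') (S a' b'))"
    by (rule sum4_swap)
  also have "\<dots> = (\<Sum>a'\<in>G. \<Sum>b'\<in>G. smul (\<Sum>\<chi>\<in>Y. \<Sum>\<psi>\<in>Y. c \<chi> \<psi> a' b') (S a' b'))"
    by (simp add: scale_sum_left)
  also have "\<dots> = (\<Sum>a'\<in>G. \<Sum>b'\<in>G. smul (iphi ^ 2 * ((if a = a' then of_nat e else 0) * (if b = b' then of_nat e else 0))) (S a' b'))"
  proof (intro sum.cong refl)
    fix a' b' assume a': "a' \<in> G" and b': "b' \<in> G"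
    have "(\<Sum>\<chi>\<in>Y. \<Sum>\<psi>\<in>Y. c \<chi> \<psi> a' b')
        = iphi ^ 2 * ((\<Sum>\<chi>\<in>Y. \<chi> a * char_inv N \<chi> a') * (\<Sum>\<psi>\<in>Y. \<psi> b * char_inv N \<psi> b'))"
    proof -
      have "iphi ^ 2 * ((\<Sum>\<chi>\<in>Y. \<chi> a * char_inv N \<chi> a') * (\<Sum>\<psi>\<in>Y. \<psi> b * char_inv N \<psi> b'))
          = (\<Sum>\<chi>\<in>Y. \<Sum>\<psi>\<in>Y. iphi ^ 2 * ((\<chi> a * char_inv N \<chi> a') * (\<psi> b * char_inv N \<psi> b')))"
        unfolding sum_product by (simp add: sum_distrib_left)
      also have "\<dots> = (\<Sum>\<chi>\<in>Y. \<Sum>\<psi>\<in>Y. c \<chi> \<psi> a' b')"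
        by (intro sum.cong refl) (simp add: c_def ac_simps)
      finally show ?thesis by simp
    qed
    also have "\<dots> = iphi ^ 2 * ((if a = a' then of_nat e else 0) * (if b = b' then of_nat e else 0))"
      using K[OF a a'] K[OF b b'] by simp
    finally show "smul (\<Sum>\<chi>\<in>Y. \<Sum>\<psi>\<in>Y. c \<chi> \<psi> a' b') (S a' b') = smul (iphi ^ 2 * ((if a = a' then of_nat e else 0) * (if b = b' then of_nat e else 0))) (S a' b')"
      by simp
  qed
  also have "\<dots> = (\<Sum>a'\<in>G. \<Sum>b'\<in>G. if a' = a then (if b' = b then S a' b' else 0) else 0)"
  proof (intro sum.cong refl)
    fix a' b'
    have ee: "iphi ^ 2 * (of_nat e * of_nat e) = (1::'a)"
      using iphi by (simp add: power2_eq_square algebra_simps)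
    show "smul (iphi ^ 2 * ((if a = a' then of_nat e else 0) * (if b = b' then of_nat e else 0))) (S a' b')
        = (if a' = a then (if b' = b then S a' b' else 0) else 0)"
      using ee by (cases "a = a'"; cases "b = b'") auto
  qed
  also have "\<dots> = (\<Sum>a'\<in>G. if a' = a then (\<Sum>b'\<in>G. if b' = b then S a' b' else 0) else 0)"
    by (intro sum.cong refl) simp
  also have "\<dots> = S a b" using a b by (simp add: sum.delta)
  finally show ?thesis by (simp add: S_def)
qed

lemma E_alpha: assumes X: "\<chi> \<in> dirichlet_chars N" "\<psi> \<in> dirichlet_chars N" and gh: "coprime g h"
  shows "E (al g h \<chi> \<psi>) = (if \<forall>c\<in>G. \<chi> c * \<psi> c = \<theta> c then al g h \<chi> \<psi> else 0)"
proof -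
  define \<rho> where "\<rho> c = char_inv N \<theta> c * (\<chi> c * \<psi> c)" for c
  have \<rho>X: "\<rho> \<in> dirichlet_chars N"
    unfolding \<rho>_def using prod_X[OF ci_X[OF thetaX] prod_X[OF X]] by simp
  have "E (al g h \<chi> \<psi>) = smul iphi (\<Sum>c\<in>G. smul (\<rho> c) (al g h \<chi> \<psi>))"
    by (simp add: e_proj_def act_alpha[OF _ X gh] \<rho>_def)
  also have "\<dots> = smul (iphi * (\<Sum>c\<in>G. \<rho> c)) (al g h \<chi> \<psi>)"
    unfolding scale_sum_left[symmetric] by simp
  also have "(\<Sum>c\<in>G. \<rho> c) = (if \<forall>c\<in>G. \<rho> c = 1 then of_nat e else 0)" by (rule sumG[OF \<rho>X])
  also have "(\<forall>c\<in>G. \<rho> c = 1) = (\<forall>c\<in>G. \<chi> c * \<psi> c = \<theta> c)"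
  proof (intro ball_cong refl iffI)
    fix c assume c: "c \<in> G"
    have ti: "char_inv N \<theta> c * \<theta> c = 1" by (rule ci_mul[OF thetaX c])
    show "\<chi> c * \<psi> c = \<theta> c" if "\<rho> c = 1"
      using inv_unique[of "\<chi> c * \<psi> c" "char_inv N \<theta> c" "\<theta> c"] that ti
      by (simp add: \<rho>_def mult.commute)
    show "\<rho> c = 1" if "\<chi> c * \<psi> c = \<theta> c" using that ti by (simp add: \<rho>_def)
  qed
  finally show ?thesis using iphi by (simp add: mult.commute)
qed


lemma decomp: assumes u: "u < N" shows "\<exists>a\<in>G. gcd u N * a mod N = u"
proof -
  define g where "g = gcd u N"
  define u' where "u' = u div g"
  define N' where "N' = N div g"
  have uu: "u = g * u'" by (simp add: u'_def g_def)
  have NN: "N = g * N'" by (simp add: N'_def g_def)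
  have cop: "coprime u' N'" using div_gcd_coprime[of u N] N1 by (simp add: u'_def N'_def g_def)
  define P where "P = prime_factors N - {q. q dvd u'}"
  define t where "t = \<Prod>P"
  define a where "a = u' + N' * t"
  have fin: "finite P" unfolding P_def by (rule finite_Diff[OF finite_set_mset])
  have Pprime: "prime x" if xP: "x \<in> P" for x
  proof -
    have "x \<in> prime_factors N" using xP unfolding P_def by (rule DiffD1)
    then show ?thesis by (rule in_prime_factors_imp_prime)
  qed
  have ac: "coprime a N"
  proof (rule ccontr)
    assume nc: "\<not> coprime a N"
    then have "gcd a N \<noteq> 1" unfolding coprime_iff_gcd_eq_1 .
    then obtain q where q: "prime q" "q dvd gcd a N" using prime_factor_nat by blast
    have qa: "q dvd a" using q(2) gcd_dvd1 dvd_trans by blast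
    have qN: "q dvd N" using q(2) gcd_dvd2 dvd_trans by blast
    have tdiv: "q dvd t \<longleftrightarrow> q \<in> P"
    proof
      assume "q dvd t"
      then obtain x where "x \<in> P" "q dvd x" using prime_dvd_prod_iff[OF fin q(1)] by (auto simp: t_def)
      then show "q \<in> P" using primes_dvd_imp_eq[OF q(1) Pprime] by metis
    next
      assume qP: "q \<in> P" then show "q dvd t" using dvd_prodI[OF fin qP, of "\<lambda>x. x"] by (simp add: t_def)
    qed
    show False
    proof (cases "q dvd u'")
      case True
      then have "q dvd N' * t" using qa unfolding a_def by (simp add: dvd_add_right_iff)
      moreover have "\<not> q dvd N'"
      proof
        assume "q dvd N'"
        then have "is_unit q" using coprime_common_divisor[OF cop True] by blast
        then show False using q(1) by simp
      qed
      ultimately have "q dvd t" using q(1) by (simp add: prime_dvd_mult_iff)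
      then have "q \<in> P" using tdiv by blast
      then have "q \<notin> {q. q dvd u'}" unfolding P_def by blast
      then show False using \<open>q dvd u'\<close> by blast
    next
      case False
      have "q \<in> prime_factors N" using q(1) qN N1 by (intro prime_factorsI) simp_all
      moreover have "q \<notin> {q. q dvd u'}" using False by blast
      ultimately have "q \<in> P" unfolding P_def by (rule DiffI)
      then have "q dvd N' * t" using tdiv by simp
      then have "q dvd u'" using qa by (simp add: a_def dvd_add_left_iff)
      then show False using False by simp
    qed
  qed
  have aG: "a mod N \<in> G" using ac N1 by (simp add: G_iff)
  have "g * (a mod N) mod N = g * a mod N" by (simp add: mod_mult_right_eq)
  also have "g * a = u + N * t" by (simp add: a_def uu NN algebra_simps)
  also have "(u + N * t) mod N = u" using u by simp
  finally show ?thesis using aG by (auto simp: g_def)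
qed


lemma main: assumes spanall: "span {sb u v | u v. unimod N u v} = UNIV"
  shows "span {al g h \<chi> (\<lambda>b. \<theta> b * char_inv N \<chi> b) | \<chi> g h.
              \<chi> \<in> dirichlet_chars N \<and> g dvd N \<and> h dvd N \<and> coprime g h} = range E"
proof -
  define A where "A = {al g h \<chi> (\<lambda>b. \<theta> b * char_inv N \<chi> b) | \<chi> g h.
              \<chi> \<in> dirichlet_chars N \<and> g dvd N \<and> h dvd N \<and> coprime g h}"
  interpret Eh: Modules.module_hom smul smul E by (rule E_hom)
  have AE: "A \<subseteq> range E"
  proof
    fix y assume "y \<in> A"
    then obtain \<chi> g h where y: "y = al g h \<chi> (\<lambda>b. \<theta> b * char_inv N \<chi> b)"
      and X: "\<chi> \<in> dirichlet_chars N" and gh: "coprime g h" unfolding A_def by blast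
    have \<psi>X: "(\<lambda>b. \<theta> b * char_inv N \<chi> b) \<in> dirichlet_chars N"
      by (rule prod_X[OF thetaX ci_X[OF X]])
    have cond: "\<forall>c\<in>G. \<chi> c * (\<theta> c * char_inv N \<chi> c) = \<theta> c"
    proof
      fix c assume c: "c \<in> G"
      have "\<chi> c * (\<theta> c * char_inv N \<chi> c) = \<theta> c * (char_inv N \<chi> c * \<chi> c)" by (simp add: ac_simps)
      then show "\<chi> c * (\<theta> c * char_inv N \<chi> c) = \<theta> c" using ci_mul[OF X c] by simp
    qed
    have "E y = y" using E_alpha[OF X \<psi>X gh] cond y by simp
    then show "y \<in> range E" by (metis rangeI)
  qed
  have 1: "span A \<subseteq> range E"
    by (rule span_minimal[OF AE]) (rule Eh.subspace_image[OF subspace_UNIV])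
  have gen: "E y \<in> span A" if yS: "y \<in> {sb u v | u v. unimod N u v}" for y
  proof -
    obtain u v where y: "y = sb u v" and uv: "unimod N u v" using yS by blast
    have uN: "u < N" and vN: "v < N" and cuv: "coprime (gcd u v) N" using uv by (auto simp: unimod_def)
    define g where "g = gcd u N"
    define h where "h = gcd v N"
    obtain a where a: "a \<in> G" "g * a mod N = u" using decomp[OF uN] by (auto simp: g_def)
    obtain b where b: "b \<in> G" "h * b mod N = v" using decomp[OF vN] by (auto simp: h_def)
    have gh: "coprime g h"
    proof (rule coprimeI)
      fix c assume "c dvd g" "c dvd h"
      then have "c dvd u" "c dvd v" "c dvd N" by (auto simp: g_def h_def intro: dvd_trans)
      then have "c dvd gcd u v" by simp
      then show "is_unit c" using coprime_common_divisor[OF cuv] \<open>c dvd N\<close> by blast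
    qed
    have gN: "g dvd N" and hN: "h dvd N" by (simp_all add: g_def h_def)
    have "y = (\<Sum>\<chi>\<in>Y. \<Sum>\<psi>\<in>Y. smul (\<chi> a * \<psi> b) (al g h \<chi> \<psi>))"
      using inversion[OF a(1) b(1), of g h] a b y by simp
    then have Ey: "E y = (\<Sum>\<chi>\<in>Y. \<Sum>\<psi>\<in>Y. smul (\<chi> a * \<psi> b) (E (al g h \<chi> \<psi>)))"
      by (simp add: Eh.sum Eh.scale)
    have each: "E (al g h \<chi> \<psi>) \<in> span A" if cY: "\<chi> \<in> Y" "\<psi> \<in> Y" for \<chi> \<psi>
    proof -
      have X: "\<chi> \<in> dirichlet_chars N" "\<psi> \<in> dirichlet_chars N" using cY Y_X by auto
      show ?thesis
      proof (cases "\<forall>c\<in>G. \<chi> c * \<psi> c = \<theta> c")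
        case True
        have "\<psi> = (\<lambda>b. \<theta> b * char_inv N \<chi> b)"
        proof
          fix x show "\<psi> x = \<theta> x * char_inv N \<chi> x"
          proof (cases "x \<in> G")
            case xG: True
            have "\<theta> x * char_inv N \<chi> x = \<psi> x * (char_inv N \<chi> x * \<chi> x)"
              using True xG by (metis mult.assoc mult.commute)
            then show ?thesis using ci_mul[OF X(1) xG] by simp
          next
            case False
            then show ?thesis using chi_out[OF X(2) False] chi_out[OF thetaX False] by simp
          qed
        qed
        then have "al g h \<chi> \<psi> \<in> A" unfolding A_def using X(1) gN hN gh by blast
        then show ?thesis using E_alpha[OF X gh] True by (simp add: span_base)
      next
        case False
        have "E (al g h \<chi> \<psi>) = 0" using E_alpha[OF X gh] by (simp only: if_not_P[OF False])
        then show ?thesis by (simp add: span_zero)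
      qed
    qed
    show ?thesis unfolding Ey by (intro span_sum span_scale each)
  qed
  have 2: "range E \<subseteq> span A"
  proof
    fix z assume "z \<in> range E"
    then obtain x where z: "z = E x" by blast
    have xin: "x \<in> span {sb u v | u v. unimod N u v}" using spanall by simp
    have sub: "subspace {x. E x \<in> span A}" by (rule Eh.subspace_linear_preimage) simp
    have "E x \<in> span A" using span_induct[OF xin, of "\<lambda>x. E x \<in> span A"] sub gen by simp
    then show "z \<in> span A" using z by simp
  qed
  show ?thesis using 1 2 unfolding A_def by blast
qed

end


theorem corollary2p11:
  fixes p M N :: nat
    and smul :: "'o::idom \<Rightarrow> 'm::ab_group_add \<Rightarrow> 'm"
    and sb :: "nat \<Rightarrow> nat \<Rightarrow> 'm"
    and act :: "nat \<Rightarrow> 'm \<Rightarrow> 'm"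
    and \<theta> :: "nat \<Rightarrow> 'o"
  assumes "prime p" and "odd p" and "M > 0" and "\<not> p dvd M * totient M"
    and "N = M \<or> N = M * p" and "N > 1"
    and "\<forall>n. \<not> p dvd n \<longrightarrow> (\<exists>w::'o. of_nat n * w = 1)"
    and "\<exists>\<zeta>::'o. \<zeta> ^ totient N = 1 \<and> (\<forall>k. 0 < k \<and> k < totient N \<longrightarrow> \<zeta> ^ k \<noteq> 1)"
    and "modsym_space smul N sb act"
    and "\<theta> \<in> dirichlet_chars N" and "\<theta> (N - 1) = 1"
  shows "Modules.module.span smul
           {alpha smul sb N g h \<chi> (\<lambda>b. \<theta> b * char_inv N \<chi> b) | \<chi> g h.
              \<chi> \<in> dirichlet_chars N \<and> g dvd N \<and> h dvd N \<and> coprime g h}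
         = range (e_proj smul act N \<theta>)"
proof -
  note pr = assms(1)
  obtain \<zeta> :: 'o where z1: "\<zeta> ^ totient N = 1" and zp: "\<And>k. 0 < k \<Longrightarrow> k < totient N \<Longrightarrow> \<zeta> ^ k \<noteq> 1"
    using assms(8) by blast
  have pnd: "\<not> p dvd totient N"
  proof
    assume pd: "p dvd totient N"
    have ptM: "\<not> p dvd totient M" using assms(4) dvd_mult[of p "totient M" M] by blast
    show False
    proof (cases "N = M")
      case True then show False using pd ptM by simp
    next
      case False
      then have NMp: "N = M * p" using assms(5) by blast
      have "\<not> p dvd M" using assms(4) dvd_mult2[of p M "totient M"] by blast
      then have "coprime p M" by (rule prime_imp_coprime[OF pr])
      then have "totient N = totient M * (p - 1)"
        using NMp totient_mult_coprime[of M p] totient_prime[OF pr] by (simp add: coprime_commute)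
      then have "p dvd totient M \<or> p dvd (p - 1)" using pd prime_dvd_mult_iff[OF pr] by simp
      moreover have "\<not> p dvd (p - 1)"
      proof
        assume "p dvd (p - 1)"
        moreover have "p - 1 > 0" using prime_gt_1_nat[OF pr] by simp
        ultimately have "p \<le> p - 1" by (rule dvd_imp_le)
        then show False using prime_gt_1_nat[OF pr] by simp
      qed
      ultimately show False using ptM by blast
    qed
  qed
  have einv: "\<exists>w::'o. of_nat (totient N) * w = 1" using assms(7) pnd by blast
  have ms_def': "Modules.module smul
     \<and> (\<forall>u v. unimod N u v \<longrightarrow>
           sb u v = sb ((N - u) mod N) ((N - v) mod N)
         \<and> sb u v = - sb ((N - v) mod N) u
         \<and> sb u v = sb u ((u + v) mod N) + sb ((u + v) mod N) v)
     \<and> (\<forall>a\<in>units_mod N.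
           (\<forall>c x. act a (smul c x) = smul c (act a x))
         \<and> (\<forall>x y. act a (x + y) = act a x + act a y)
         \<and> (\<forall>u v. unimod N u v \<longrightarrow> act a (sb u v) = sb (a * u mod N) (a * v mod N)))
     \<and> Modules.module.span smul {sb u v | u v. unimod N u v} = UNIV"
    using assms(9) unfolding modsym_space_def .
  have md: "Modules.module smul" using ms_def' by blast
  have msl: "ms N \<zeta> smul sb act \<theta>"
  proof (rule ms.intro)
    show "chars N \<zeta>"
      by (rule chars.intro, rule grp.intro, rule assms(6), rule chars_axioms.intro, rule z1, rule zp)
    show "Modules.module smul" by (rule md)
    show "ms_axioms N smul sb act \<theta>"
      by (rule ms_axioms.intro) (use einv ms_def' assms(10) in auto)
  qed
  show ?thesis using ms.main[OF msl] ms_def' by blast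
qed

end
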